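(* Let $x,y$ be allocation rules of $n$-agent rank-based auctions, with $b$ the equilibrium bid function of the all-pay auction with rule $x$. If $\delta_N\le 1/n$, then $Z_y(\delta_N)\,b(\delta_N)\le e\,\delta_N\,y'(\delta_N)$.
   Context: Agents have values i.i.d. from a continuous distribution $F$ on $[0,1]$; quantile $q=F(v)$, $v(q)=F^{-1}(q)$. For $k\in\{1,\dots,n-1\}$ the $k$-highest-bids-win allocation rule is $x_k(q)=\sum_{i=0}^{k-1}\binom{n-1}{i}q^{n-1-i}(1-q)^i$; $x_0\equiv0$, $x_n\equiv1$. A rank-based auction with position weights $1\ge w_1\ge\cdots\ge w_n\ge 0$ ($w_{n+1}:=0$) has allocation rule $\sum_{k=1}^{n}(w_k-w_{k+1})x_k(q)$. The all-pay Bayes–Nash equilibrium bid function for rule $x$ satisfies $b(0)=0$, $b'(q)=v(q)x'(q)$. $Z_y(q)=(1-q)\,y'(q)/x'(q)$. $\delta_N=\max(25\log\log N,n)/N$. *)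

theory Defs
  imports "HOL-Analysis.Analysis"
begin

text \<open>k-highest-bids-win allocation rule for n agents (x_0 = 0, x_n = 1 automatically).\<close>
definition khw_alloc :: "nat \<Rightarrow> nat \<Rightarrow> real \<Rightarrow> real" where
  "khw_alloc n k q = (\<Sum>i<k. real ((n - 1) choose i) * q ^ (n - 1 - i) * (1 - q) ^ i)"

definition valid_weights :: "nat \<Rightarrow> (nat \<Rightarrow> real) \<Rightarrow> bool" where
  "valid_weights n w \<longleftrightarrow> w 1 \<le> 1 \<and> w n \<ge> 0 \<and> (\<forall>k\<in>{1..<n}. w (Suc k) \<le> w k)"

definition rank_alloc :: "nat \<Rightarrow> (nat \<Rightarrow> real) \<Rightarrow> real \<Rightarrow> real" where
  "rank_alloc n w q =
     (\<Sum>k=1..n. (w k - (if k = n then 0 else w (Suc k))) * khw_alloc n k q)"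

definition cont_cdf01 :: "(real \<Rightarrow> real) \<Rightarrow> bool" where
  "cont_cdf01 F \<longleftrightarrow> mono F \<and> continuous_on UNIV F \<and>
     (\<forall>t\<le>0. F t = 0) \<and> (\<forall>t\<ge>1. F t = 1)"

text \<open>Value as function of quantile: v(q) = F^{-1}(q) (generalized inverse).\<close>
definition quantile_val :: "(real \<Rightarrow> real) \<Rightarrow> real \<Rightarrow> real" where
  "quantile_val F q = Inf {t \<in> {0..1}. q \<le> F t}"

text \<open>All-pay BNE bid function: b(0)=0, b'(q) = v(q) x'(q).\<close>
definition allpay_bid :: "(real \<Rightarrow> real) \<Rightarrow> (real \<Rightarrow> real) \<Rightarrow> real \<Rightarrow> real" where
  "allpay_bid F x q = integral {0..q} (\<lambda>t. quantile_val F t * deriv x t)"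

definition Zfun :: "(real \<Rightarrow> real) \<Rightarrow> (real \<Rightarrow> real) \<Rightarrow> real \<Rightarrow> real" where
  "Zfun x y q = (1 - q) * deriv y q / deriv x q"

definition deltaN :: "nat \<Rightarrow> nat \<Rightarrow> real" where
  "deltaN n N = max (25 * ln (ln (real N))) (real n) / real N"

end

theory Submission imports Defs begin

definition Dk :: "nat \<Rightarrow> nat \<Rightarrow> real \<Rightarrow> real" where
  "Dk m k q = (if k = 0 then 0 else real m * real ((m-1) choose (k-1)) * q^(m-k) * (1-q)^(k-1))"

lemma term_deriv:
  "((\<lambda>q::real. real (m choose k) * q ^ (m - k) * (1 - q) ^ k) has_real_derivative
     real (m choose k) * (real (m-k) * q^(m-k-1) * (1-q)^k - q^(m-k) * (real k * (1-q)^(k-1)))) (at q)"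
  by (auto intro!: derivative_eq_intros simp: algebra_simps)

lemma step_identity:
  assumes "k \<le> m"
  shows "Dk m (Suc k) q = Dk m k q +
     real (m choose k) * (real (m-k) * q^(m-k-1) * (1-q)^k - q^(m-k) * (real k * (1-q)^(k-1)))"
proof -
  have A: "real (m - k) * real (m choose k) = real m * real ((m - 1) choose k)"
    using binomial_absorb_comp[of m k] by (metis of_nat_mult)
  show ?thesis
  proof (cases k)
    case 0
    then show ?thesis using A by (simp add: Dk_def)
  next
    case (Suc i)
    have B: "real k * real (m choose k) = real m * real ((m - 1) choose i)"
      using binomial_absorption[of i m] Suc by (metis of_nat_mult)
    show ?thesis
    proof (cases "k = m")
      case True
      then show ?thesis using Suc B by (simp add: Dk_def algebra_simps)
    next
      case False
      then obtain j where j: "m - k = Suc j" using assms by (metis Suc_diff_Suc le_neq_implies_less)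
      have e1: "m - Suc k = j" using j by simp
      have e2: "m - k - 1 = j" using j by simp
      have R: "\<And>X Y C jj ii (q::real). X = C + jj*C \<Longrightarrow> Y = C + ii*C \<Longrightarrow>
          X * q^j*(1-q)^(Suc i) = Y*q^(Suc j)*(1-q)^i + C*((1+jj)*q^j*(1-q)^(Suc i) - q^(Suc j)*((1+ii)*(1-q)^i))"
        by (simp add: algebra_simps)
      have X: "real m * real ((m-1) choose k) = real (m choose k) + real j * real (m choose k)"
        using A j by (simp add: algebra_simps)
      have Y: "real m * real ((m-1) choose i) = real (m choose k) + real i * real (m choose k)"
        using B Suc by (simp add: algebra_simps)
      show ?thesis unfolding Dk_def using Suc j e1 e2 R[OF X Y, of q]
        by (simp add: mult.assoc)
    qed
  qed
qed

lemma khw_deriv: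
  "k \<le> Suc m \<Longrightarrow> (khw_alloc (Suc m) k has_real_derivative Dk m k q) (at q)"
proof (induction k)
  case 0
  then show ?case by (simp add: khw_alloc_def Dk_def)
next
  case (Suc k)
  have eq: "khw_alloc (Suc m) (Suc k) = (\<lambda>q. khw_alloc (Suc m) k q + real (m choose k) * q ^ (m - k) * (1 - q) ^ k)"
    by (auto simp: khw_alloc_def)
  have km: "k \<le> m" using Suc.prems by simp
  have D: "((\<lambda>q. khw_alloc (Suc m) k q + real (m choose k) * q ^ (m - k) * (1 - q) ^ k) has_real_derivative
      Dk m k q + real (m choose k) * (real (m-k) * q^(m-k-1) * (1-q)^k - q^(m-k) * (real k * (1-q)^(k-1)))) (at q)"
    by (rule DERIV_add[OF Suc.IH[OF Suc_leD[OF Suc.prems]] term_deriv])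
  show ?case unfolding eq step_identity[OF km] by (rule D)
qed

lemma Dk_nonneg: "0 \<le> q \<Longrightarrow> q \<le> 1 \<Longrightarrow> 0 \<le> Dk m k q"
  by (simp add: Dk_def)

lemma Dk_ratio:
  assumes "0 \<le> t" "t \<le> d" "d \<le> 1" "k \<le> Suc m"
  shows "(1-d)^(m-1) * Dk m k t \<le> Dk m k d"
proof (cases "k = 0 \<or> m = 0 \<or> k = Suc m")
  case True
  then show ?thesis by (cases m) (auto simp: Dk_def binomial_eq_0)
next
  case False
  then have k: "1 \<le> k" "k \<le> m" using assms by auto
  have a: "t^(m-k) \<le> d^(m-k)" using assms by (intro power_mono) auto
  have b: "(1-t)^(k-1) \<le> 1" using assms by (intro power_le_one) auto
  have c: "(1-d)^(m-1) \<le> (1-d)^(k-1)" using assms k by (intro power_decreasing) auto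
  have "(1-d)^(m-1) * ((1-t)^(k-1)) \<le> (1-d)^(k-1)"
  proof -
    have "(1-d)^(m-1) * ((1-t)^(k-1)) \<le> (1-d)^(m-1)"
      using b assms by (intro mult_left_le) auto
    then show ?thesis using c by linarith
  qed
  then have "(1-d)^(m-1) * (t^(m-k) * (1-t)^(k-1)) \<le> d^(m-k) * (1-d)^(k-1)"
  proof -
    have "(1-d)^(m-1) * (t^(m-k) * (1-t)^(k-1)) = t^(m-k) * ((1-d)^(m-1) * (1-t)^(k-1))"
      by (simp add: algebra_simps)
    also have "\<dots> \<le> d^(m-k) * (1-d)^(k-1)"
      using a assms \<open>(1-d)^(m-1) * ((1-t)^(k-1)) \<le> (1-d)^(k-1)\<close>
      by (intro mult_mono) auto
    finally show ?thesis .
  qed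
  then have "real m * real ((m-1) choose (k-1)) * ((1-d)^(m-1) * (t^(m-k) * (1-t)^(k-1)))
     \<le> real m * real ((m-1) choose (k-1)) * (d^(m-k) * (1-d)^(k-1))"
    by (intro mult_left_mono) auto
  then show ?thesis using k by (simp add: Dk_def algebra_simps)
qed

lemma e_bound:
  assumes "0 \<le> d" "real (Suc m) * d \<le> 1"
  shows "1 \<le> exp 1 * (1-d)^(m-1)"
proof (cases m)
  case 0
  then show ?thesis by (simp add: one_le_exp_iff)
next
  case (Suc p)
  have d1: "d < 1" using assms Suc
  proof -
    have "2 * d \<le> real (Suc m) * d" using assms Suc by (intro mult_right_mono) auto
    then show ?thesis using assms by linarith
  qed
  define y where "y = d / (1-d)"
  have y0: "0 \<le> y" using assms d1 by (simp add: y_def)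
  have one: "(1-d) * (1+y) = 1" using d1 by (simp add: y_def field_simps)
  have "real p * y \<le> 1"
  proof -
    have "real p * d \<le> 1 - d" using assms Suc by (simp add: algebra_simps)
    then show ?thesis using d1 by (simp add: y_def field_simps)
  qed
  have "(1+y)^p \<le> exp y ^ p"
    using y0 by (intro power_mono) (auto simp: add.commute exp_ge_add_one_self)
  also have "\<dots> = exp (real p * y)" by (simp add: exp_of_nat_mult)
  also have "\<dots> \<le> exp 1" using \<open>real p * y \<le> 1\<close> by simp
  finally have h: "(1+y)^p \<le> exp 1" .
  have "1 = (1-d)^p * (1+y)^p" using one by (metis power_mult_distrib power_one)
  also have "\<dots> \<le> (1-d)^p * exp 1" using h d1 by (intro mult_left_mono) auto
  finally show ?thesis using Suc by (simp add: mult.commute)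
qed

definition cw :: "nat \<Rightarrow> (nat \<Rightarrow> real) \<Rightarrow> nat \<Rightarrow> real" where
  "cw n w k = w k - (if k = n then 0 else w (Suc k))"

lemma rank_deriv:
  "(rank_alloc (Suc m) w has_real_derivative (\<Sum>k=1..Suc m. cw (Suc m) w k * Dk m k q)) (at q)"
  unfolding rank_alloc_def cw_def
  by (intro DERIV_sum DERIV_cmult khw_deriv) auto

lemma rank_deriv_eq: "deriv (rank_alloc (Suc m) w) q = (\<Sum>k=1..Suc m. cw (Suc m) w k * Dk m k q)"
  by (rule DERIV_imp_deriv[OF rank_deriv])

lemma cw_nonneg: "valid_weights n w \<Longrightarrow> k \<in> {1..n} \<Longrightarrow> 0 \<le> cw n w k"
  unfolding valid_weights_def cw_def by auto

lemma rank_deriv_nonneg: "valid_weights (Suc m) w \<Longrightarrow> 0 \<le> q \<Longrightarrow> q \<le> 1 \<Longrightarrow>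
   0 \<le> deriv (rank_alloc (Suc m) w) q"
  unfolding rank_deriv_eq
  by (intro sum_nonneg mult_nonneg_nonneg cw_nonneg Dk_nonneg) auto

lemma rank_ratio: "valid_weights (Suc m) w \<Longrightarrow> 0 \<le> t \<Longrightarrow> t \<le> d \<Longrightarrow> d \<le> 1 \<Longrightarrow>
   (1-d)^(m-1) * deriv (rank_alloc (Suc m) w) t \<le> deriv (rank_alloc (Suc m) w) d"
  unfolding rank_deriv_eq sum_distrib_left
  apply (intro sum_mono)
  subgoal for k
    using Dk_ratio[of t d k m] cw_nonneg[of "Suc m" w k]
    by (simp add: mult.left_commute mult_left_mono)
  done

lemma qv_le: "F 1 = 1 \<Longrightarrow> q \<le> 1 \<Longrightarrow> quantile_val F q \<le> 1"
  unfolding quantile_val_def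
  by (rule cInf_lower) (auto simp: bdd_below_def)

theorem mainTheorem11:
  fixes n N :: nat and F :: "real \<Rightarrow> real" and w u :: "nat \<Rightarrow> real"
  assumes "n \<ge> 1"
    and "cont_cdf01 F"
    and "valid_weights n w" and "valid_weights n u"
    and "deltaN n N \<le> 1 / real n"
  shows "Zfun (rank_alloc n w) (rank_alloc n u) (deltaN n N)
           * allpay_bid F (rank_alloc n w) (deltaN n N)
         \<le> exp 1 * deltaN n N * deriv (rank_alloc n u) (deltaN n N)"
proof -
  obtain m where n: "n = Suc m" using assms(1) by (cases n) auto
  define d where "d = deltaN n N"
  have d0: "0 \<le> d" unfolding d_def deltaN_def by (intro divide_nonneg_nonneg) auto
  have dn: "real (Suc m) * d \<le> 1" using assms(5) n unfolding d_def[symmetric]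
    by (simp add: field_simps)
  have d1: "d \<le> 1"
  proof -
    have "1 * d \<le> real (Suc m) * d" using d0 by (intro mult_right_mono) auto
    then show ?thesis using dn by linarith
  qed
  have F1: "F 1 = 1" using assms(2) unfolding cont_cdf01_def by auto
  define X where "X = deriv (rank_alloc n w)"
  define Y where "Y = deriv (rank_alloc n u)"
  have X0: "\<And>t. 0 \<le> t \<Longrightarrow> t \<le> 1 \<Longrightarrow> 0 \<le> X t"
    unfolding X_def n using assms(3) n by (intro rank_deriv_nonneg) auto
  have Y0: "0 \<le> Y d"
    unfolding Y_def n using assms(4) n d0 d1 by (intro rank_deriv_nonneg) auto
  have E: "1 \<le> exp 1 * (1-d)^(m-1)" by (rule e_bound[OF d0 dn])
  have Xt: "\<And>t. 0 \<le> t \<Longrightarrow> t \<le> d \<Longrightarrow> quantile_val F t * X t \<le> exp 1 * X d"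
  proof -
    fix t assume t: "0 \<le> t" "t \<le> d"
    have Xt0: "0 \<le> X t" using X0 t d1 by auto
    have "quantile_val F t * X t \<le> 1 * X t"
      using qv_le[of F t, OF F1] t d1 Xt0 by (intro mult_right_mono) auto
    also have "\<dots> \<le> exp 1 * (1-d)^(m-1) * X t" using E Xt0 by (intro mult_right_mono) auto
    also have "\<dots> = exp 1 * ((1-d)^(m-1) * X t)" by simp
    also have "\<dots> \<le> exp 1 * X d"
      using rank_ratio[of m w t d] assms(3) n t d1 unfolding X_def by (intro mult_left_mono) auto
    finally show "quantile_val F t * X t \<le> exp 1 * X d" .
  qed
  have B: "allpay_bid F (rank_alloc n w) d \<le> exp 1 * d * X d"
  proof (cases "(\<lambda>t. quantile_val F t * X t) integrable_on {0..d}")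
    case True
    have "integral {0..d} (\<lambda>t. quantile_val F t * X t) \<le> integral {0..d} (\<lambda>t. exp 1 * X d)"
      using True Xt by (intro integral_le) auto
    also have "\<dots> = exp 1 * d * X d" using d0 by simp
    finally show ?thesis unfolding allpay_bid_def X_def .
  next
    case False
    then have "allpay_bid F (rank_alloc n w) d = 0"
      unfolding allpay_bid_def X_def by (simp add: not_integrable_integral)
    moreover have "0 \<le> exp 1 * d * X d" using X0 d0 d1 by simp
    ultimately show ?thesis by simp
  qed
  show ?thesis unfolding d_def[symmetric] Zfun_def X_def[symmetric] Y_def[symmetric]
  proof (cases "X d = 0")
    case True
    then show "(1 - d) * Y d / X d * allpay_bid F (rank_alloc n w) d \<le> exp 1 * d * Y d"
      using Y0 d0 by simp
  next
    case False
    have Xp: "0 < X d" using X0[OF d0 d1] False by linarith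
    have c: "0 \<le> (1 - d) * Y d / X d" using d1 Y0 Xp by simp
    have "(1 - d) * Y d / X d * allpay_bid F (rank_alloc n w) d \<le> (1 - d) * Y d / X d * (exp 1 * d * X d)"
      using B c by (rule mult_left_mono)
    also have "\<dots> = (1 - d) * (exp 1 * d * Y d)" using Xp by (simp add: field_simps)
    also have "\<dots> \<le> 1 * (exp 1 * d * Y d)" using d0 Y0 by (intro mult_right_mono) auto
    finally show "(1 - d) * Y d / X d * allpay_bid F (rank_alloc n w) d \<le> exp 1 * d * Y d" by simp
  qed
qed

end
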